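(* Let $\mathcal L$ be a finite atomic lattice. Identify each $x\in\bar{\mathcal L}$ with the simplex $\{a\in\mathcal A(\mathcal L): a\le x\}$ of $\Gamma(\mathcal L)$; this identifies $\bar{\mathcal L}$ with a subposet of $\mathcal F(\Gamma(\mathcal L))$ and hence $\Delta(\bar{\mathcal L})$ with a subcomplex of ${\rm Bd}(\Gamma(\mathcal L))$. Then ${\rm Bd}(\Gamma(\mathcal L))$ collapses onto $\Delta(\bar{\mathcal L})$. Consequently $\Gamma(\mathcal L)$ and $\Delta(\bar{\mathcal L})$ have the same simple homotopy type.
   Context: For a finite lattice $\mathcal L$ with minimum $\hat0$ and maximum $\hat1$, $\bar{\mathcal L}=\mathcal L\setminus\{\hat0,\hat1\}$, and $\mathcal A(\mathcal L)$ is the set of atoms (elements covering $\hat0$). $\mathcal L$ is atomic if every element is a join of atoms. The atom crosscut complex $\Gamma(\mathcal L)$ is the simplicial complex with vertex set $\mathcal A(\mathcal L)$ whose simplices are the nonempty subsets $\sigma\subseteq\mathcal A(\mathcal L)$ with $\bigvee\sigma\neq\hat1$. $\mathcal F(X)$ is the face poset, ${\rm Bd}(X)=\Delta(\mathcal F(X))$ the barycentric subdivision, $\Delta(Q)$ the order complex (simplices = nonempty chains). Same simple homotopy type means connected by a finite sequence of elementary collapses and expansions. *)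

theory Defs
  imports Main
begin

definition simplicial_complex :: "'v set set \<Rightarrow> bool" where
  "simplicial_complex K \<longleftrightarrow> finite K \<and>
     (\<forall>\<sigma>\<in>K. finite \<sigma> \<and> \<sigma> \<noteq> {}) \<and>
     (\<forall>\<sigma>\<in>K. \<forall>\<tau>. \<tau> \<subseteq> \<sigma> \<and> \<tau> \<noteq> {} \<longrightarrow> \<tau> \<in> K)"

definition order_complex :: "'b set \<Rightarrow> ('b \<Rightarrow> 'b \<Rightarrow> bool) \<Rightarrow> 'b set set" where
  "order_complex P le = {c. c \<subseteq> P \<and> c \<noteq> {} \<and> finite c \<and>
       (\<forall>x\<in>c. \<forall>y\<in>c. le x y \<or> le y x)}"

definition barycentric :: "'v set set \<Rightarrow> 'v set set set" where
  "barycentric X = order_complex X (\<subseteq>)"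

text \<open>Lattice notions. A finite lattice is modelled by a finite type that is a
complete lattice (every finite nonempty lattice is complete).\<close>

definition lattice_atoms :: "'a::complete_lattice set" where
  "lattice_atoms = {a. bot < a \<and> (\<forall>y. bot < y \<and> y \<le> a \<longrightarrow> y = a)}"

definition atomic_lattice :: "'a::complete_lattice itself \<Rightarrow> bool" where
  "atomic_lattice _ \<longleftrightarrow> (\<forall>x::'a. \<exists>S \<subseteq> lattice_atoms. x = Sup S)"

definition proper_part :: "'a::complete_lattice set" where
  "proper_part = UNIV - {bot, top}"

definition atom_crosscut :: "'a::complete_lattice set set" where
  "atom_crosscut = {\<sigma>. \<sigma> \<subseteq> lattice_atoms \<and> \<sigma> \<noteq> {} \<and> Sup \<sigma> \<noteq> top}"

definition atoms_below :: "'a::complete_lattice \<Rightarrow> 'a set" where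
  "atoms_below x = {a \<in> lattice_atoms. a \<le> x}"

definition elementary_collapse :: "'v set set \<Rightarrow> 'v set set \<Rightarrow> bool" where
  "elementary_collapse K K' \<longleftrightarrow> (\<exists>\<sigma> \<tau>. \<sigma> \<in> K \<and> \<tau> \<in> K \<and> \<sigma> \<subset> \<tau> \<and>
      card \<tau> = card \<sigma> + 1 \<and> (\<forall>\<rho>\<in>K. \<sigma> \<subseteq> \<rho> \<longrightarrow> \<rho> = \<sigma> \<or> \<rho> = \<tau>) \<and>
      K' = K - {\<sigma>, \<tau>})"

definition collapses_onto :: "'v set set \<Rightarrow> 'v set set \<Rightarrow> bool" where
  "collapses_onto K L \<longleftrightarrow> simplicial_complex K \<and> elementary_collapse\<^sup>*\<^sup>* K L"

definition sh_step :: "nat set set \<Rightarrow> nat set set \<Rightarrow> bool" where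
  "sh_step K K' \<longleftrightarrow> simplicial_complex K \<and> simplicial_complex K' \<and>
     (elementary_collapse K K' \<or> elementary_collapse K' K)"

text \<open>Same simple homotopy type (up to isomorphism): after relabelling vertices
injectively into nat (enough fresh vertices), the complexes are connected by a
finite sequence of elementary collapses and expansions.\<close>

definition same_simple_homotopy_type :: "'u set set \<Rightarrow> 'w set set \<Rightarrow> bool" where
  "same_simple_homotopy_type K L \<longleftrightarrow> simplicial_complex K \<and> simplicial_complex L \<and>
     (\<exists>(f::'u \<Rightarrow> nat) (g::'w \<Rightarrow> nat). inj_on f (\<Union>K) \<and> inj_on g (\<Union>L) \<and>
        sh_step\<^sup>*\<^sup>* ((`) f ` K) ((`) g ` L))"

end

theory Submission
  imports Defs
begin


definition cmap :: "('u \<Rightarrow> 'w) \<Rightarrow> 'u set set \<Rightarrow> 'w set set" where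
  "cmap h K = (`) h ` K"

lemma sc_collapse:
  assumes "simplicial_complex K" "elementary_collapse K K'"
  shows "simplicial_complex K'"
proof -
  obtain \<sigma> \<tau> where st: "\<sigma> \<in> K" "\<tau> \<in> K" "\<sigma> \<subset> \<tau>"
    "\<forall>\<rho>\<in>K. \<sigma> \<subseteq> \<rho> \<longrightarrow> \<rho> = \<sigma> \<or> \<rho> = \<tau>" "K' = K - {\<sigma>, \<tau>}"
    using assms(2) unfolding elementary_collapse_def by blast
  have K: "finite K" "\<And>s. s \<in> K \<Longrightarrow> finite s" "\<And>s. s \<in> K \<Longrightarrow> s \<noteq> {}"
    "\<And>s t. s \<in> K \<Longrightarrow> t \<subseteq> s \<Longrightarrow> t \<noteq> {} \<Longrightarrow> t \<in> K"
    using assms(1) unfolding simplicial_complex_def by blast+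
  have 1: "finite K'" using K(1) st(5) by simp
  have 2: "\<forall>x\<in>K'. finite x \<and> x \<noteq> {}" using K(2,3) st(5) by blast
  have 3: "\<forall>x\<in>K'. \<forall>y. y \<subseteq> x \<and> y \<noteq> {} \<longrightarrow> y \<in> K'"
  proof (intro ballI allI impI)
    fix x y assume xy: "x \<in> K'" "y \<subseteq> x \<and> y \<noteq> {}"
    then have "y \<in> K" using K(4) st(5) by blast
    moreover have "y \<noteq> \<sigma>" using xy st by blast
    moreover have "y \<noteq> \<tau>" using xy st by blast
    ultimately show "y \<in> K'" using st(5) by blast
  qed
  show ?thesis unfolding simplicial_complex_def using 1 2 3 by blast
qed

lemma sc_image:
  assumes "inj h" "simplicial_complex K"
  shows "simplicial_complex (cmap h K)"
proof -
  have K: "finite K" "\<And>s. s \<in> K \<Longrightarrow> finite s" "\<And>s. s \<in> K \<Longrightarrow> s \<noteq> {}"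
    "\<And>s t. s \<in> K \<Longrightarrow> t \<subseteq> s \<Longrightarrow> t \<noteq> {} \<Longrightarrow> t \<in> K"
    using assms(2) unfolding simplicial_complex_def by blast+
  have 1: "finite (cmap h K)" using K(1) unfolding cmap_def by simp
  have 2: "\<forall>x\<in>cmap h K. finite x \<and> x \<noteq> {}" using K(2,3) unfolding cmap_def by blast
  have 3: "\<forall>x\<in>cmap h K. \<forall>y. y \<subseteq> x \<and> y \<noteq> {} \<longrightarrow> y \<in> cmap h K"
  proof (intro ballI allI impI)
    fix x y assume xy: "x \<in> cmap h K" "y \<subseteq> x \<and> y \<noteq> {}"
    then obtain s where s: "s \<in> K" "x = h ` s" unfolding cmap_def by blast
    let ?t = "s \<inter> h -` y"
    have e: "y = h ` ?t" using xy s by blast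
    have "?t \<noteq> {}" using e xy by blast
    then have "?t \<in> K" using K(4)[OF s(1)] by blast
    then show "y \<in> cmap h K" using e unfolding cmap_def by blast
  qed
  show ?thesis unfolding simplicial_complex_def using 1 2 3 by blast
qed

lemma ec_image:
  assumes "inj h" "elementary_collapse K K'"
  shows "elementary_collapse (cmap h K) (cmap h K')"
proof -
  obtain \<sigma> \<tau> where st: "\<sigma> \<in> K" "\<tau> \<in> K" "\<sigma> \<subset> \<tau>" "card \<tau> = card \<sigma> + 1"
    "\<forall>\<rho>\<in>K. \<sigma> \<subseteq> \<rho> \<longrightarrow> \<rho> = \<sigma> \<or> \<rho> = \<tau>" "K' = K - {\<sigma>, \<tau>}"
    using assms(2) unfolding elementary_collapse_def by blast
  have ii: "inj ((`) h)" using assms(1) by (meson injI inj_image_eq_iff)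
  have sub: "\<And>a b. (h ` a \<subseteq> h ` b) = (a \<subseteq> b)" using assms(1) by (rule inj_image_subset_iff)
  have eq: "\<And>a b. (h ` a = h ` b) = (a = b)" using assms(1) by (rule inj_image_eq_iff)
  have a1: "h ` \<sigma> \<in> cmap h K" "h ` \<tau> \<in> cmap h K" using st(1,2) unfolding cmap_def by blast+
  have a2: "h ` \<sigma> \<subset> h ` \<tau>" using st(3) sub eq by blast
  have a3: "card (h ` \<tau>) = card (h ` \<sigma>) + 1" using st(4) assms(1)
    by (metis card_image inj_on_subset subset_UNIV)
  have a4: "\<forall>\<rho>\<in>cmap h K. h ` \<sigma> \<subseteq> \<rho> \<longrightarrow> \<rho> = h ` \<sigma> \<or> \<rho> = h ` \<tau>"
  proof (intro ballI impI)
    fix \<rho> assume "\<rho> \<in> cmap h K" "h ` \<sigma> \<subseteq> \<rho>"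
    then obtain r where "r \<in> K" "\<rho> = h ` r" "\<sigma> \<subseteq> r" unfolding cmap_def using sub by blast
    then show "\<rho> = h ` \<sigma> \<or> \<rho> = h ` \<tau>" using st(5) by blast
  qed
  have a5: "cmap h K' = cmap h K - {h ` \<sigma>, h ` \<tau>}"
    unfolding cmap_def st(6) using image_set_diff[OF ii, of K "{\<sigma>, \<tau>}"] by simp
  show ?thesis unfolding elementary_collapse_def using a1 a2 a3 a4 a5 by blast
qed

lemma collapse_sh:
  assumes "inj h" "simplicial_complex K" "elementary_collapse\<^sup>*\<^sup>* K L"
  shows "simplicial_complex L \<and> sh_step\<^sup>*\<^sup>* (cmap h K) (cmap h L)
         \<and> sh_step\<^sup>*\<^sup>* (cmap h L) (cmap h K)"
  using assms(3)
proof (induction rule: rtranclp_induct)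
  case base
  then show ?case using assms(2) by simp
next
  case (step y z)
  then have scz: "simplicial_complex z" using sc_collapse by blast
  have s1: "sh_step (cmap h y) (cmap h z)" unfolding sh_step_def
    using step sc_image[OF assms(1)] scz ec_image[OF assms(1)] by blast
  have s2: "sh_step (cmap h z) (cmap h y)" unfolding sh_step_def
    using step sc_image[OF assms(1)] scz ec_image[OF assms(1)] by blast
  show ?case using step s1 s2 scz
    by (meson converse_rtranclp_into_rtranclp rtranclp.rtrancl_into_rtrancl)
qed

lemma cone_collapse_n:
  assumes "card {\<tau>\<in>K. s \<subseteq> \<tau>} = n" "simplicial_complex K" "s \<noteq> {}" "c \<notin> s"
    "\<forall>\<tau>\<in>K. s \<subseteq> \<tau> \<longrightarrow> insert c \<tau> \<in> K"
  shows "elementary_collapse\<^sup>*\<^sup>* K {\<tau>\<in>K. \<not> s \<subseteq> \<tau>}"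
  using assms
proof (induction n arbitrary: K rule: less_induct)
  case (less n K)
  have K: "finite K" "\<And>s. s \<in> K \<Longrightarrow> finite s" "\<And>s. s \<in> K \<Longrightarrow> s \<noteq> {}"
    "\<And>s t. s \<in> K \<Longrightarrow> t \<subseteq> s \<Longrightarrow> t \<noteq> {} \<Longrightarrow> t \<in> K"
    using less.prems(2) unfolding simplicial_complex_def by blast+
  define X where "X = {\<tau>\<in>K. s \<subseteq> \<tau>}"
  have fX: "finite X" using K(1) unfolding X_def by simp
  show ?case
  proof (cases "X = {}")
    case True
    then have "{\<tau>\<in>K. \<not> s \<subseteq> \<tau>} = K" unfolding X_def by blast
    then show ?thesis by simp
  next
    case False
    define m where "m = Max (card ` X)"
    have "m \<in> card ` X" unfolding m_def using fX False by (intro Max_in) auto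
    then obtain \<tau> where t0: "\<tau> \<in> X" "card \<tau> = m" by blast
    have "\<forall>\<rho>\<in>X. card \<rho> \<le> m" unfolding m_def using fX by simp
    then have t: "\<tau> \<in> X" "\<forall>\<rho>\<in>X. card \<rho> \<le> card \<tau>" using t0 by auto
    have tK: "\<tau> \<in> K" "s \<subseteq> \<tau>" using t(1) unfolding X_def by auto
    have ft: "finite \<tau>" using K(2) tK by blast
    have ct: "c \<in> \<tau>"
    proof (rule ccontr)
      assume "c \<notin> \<tau>"
      then have "card (insert c \<tau>) = card \<tau> + 1" using ft by simp
      moreover have "insert c \<tau> \<in> X" using less.prems(5) tK unfolding X_def by blast
      ultimately show False using t(2) by fastforce
    qed
    define \<sigma> where "\<sigma> = \<tau> - {c}"
    have ss: "s \<subseteq> \<sigma>" using tK less.prems(4) unfolding \<sigma>_def by blast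
    have sK: "\<sigma> \<in> K" using K(4)[OF tK(1)] ss less.prems(3) unfolding \<sigma>_def by blast
    have tins: "\<tau> = insert c \<sigma>" "c \<notin> \<sigma>" using ct unfolding \<sigma>_def by auto
    have fs: "finite \<sigma>" using ft unfolding \<sigma>_def by simp
    have cardt: "card \<tau> = card \<sigma> + 1" using tins fs by simp
    have free: "\<forall>\<rho>\<in>K. \<sigma> \<subseteq> \<rho> \<longrightarrow> \<rho> = \<sigma> \<or> \<rho> = \<tau>"
    proof (intro ballI impI)
      fix \<rho> assume r: "\<rho> \<in> K" "\<sigma> \<subseteq> \<rho>"
      have fr: "finite \<rho>" using K(2) r(1) by blast
      have rX: "\<rho> \<in> X" using r ss unfolding X_def by blast
      show "\<rho> = \<sigma> \<or> \<rho> = \<tau>"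
      proof (cases "c \<in> \<rho>")
        case True
        then have "\<tau> \<subseteq> \<rho>" using tins r by blast
        moreover have "card \<rho> \<le> card \<tau>" using t(2) rX by blast
        ultimately show ?thesis using fr by (metis card_seteq)
      next
        case False
        have "insert c \<rho> \<in> X" using less.prems(5) r(1) rX unfolding X_def by blast
        then have "card (insert c \<rho>) \<le> card \<tau>" using t(2) by blast
        then have "card \<rho> \<le> card \<sigma>" using False fr cardt by simp
        then have "\<rho> = \<sigma>" using r(2) fr by (metis card_seteq)
        then show ?thesis by blast
      qed
    qed
    define K' where "K' = K - {\<sigma>, \<tau>}"
    have ec: "elementary_collapse K K'" unfolding elementary_collapse_def K'_def
      using sK tK(1) tins cardt free by blast
    have scK': "simplicial_complex K'" using sc_collapse[OF less.prems(2) ec] .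
    have hyp: "\<forall>\<rho>\<in>K'. s \<subseteq> \<rho> \<longrightarrow> insert c \<rho> \<in> K'"
    proof (intro ballI impI)
      fix \<rho> assume r: "\<rho> \<in> K'" "s \<subseteq> \<rho>"
      have i: "insert c \<rho> \<in> K" using less.prems(5) r unfolding K'_def by blast
      have n1: "insert c \<rho> \<noteq> \<sigma>" using tins by blast
      have n2: "insert c \<rho> \<noteq> \<tau>"
      proof
        assume e: "insert c \<rho> = \<tau>"
        then have "\<sigma> \<subseteq> \<rho>" using tins by (metis insert_iff subsetI)
        then have "\<rho> = \<sigma> \<or> \<rho> = \<tau>" using free r(1) unfolding K'_def by blast
        then show False using r(1) unfolding K'_def by blast
      qed
      show "insert c \<rho> \<in> K'" using i n1 n2 unfolding K'_def by blast
    qed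
    have XK': "{\<rho>\<in>K'. s \<subseteq> \<rho>} = X - {\<sigma>, \<tau>}" unfolding X_def K'_def by blast
    have sX: "\<sigma> \<in> X" "\<tau> \<in> X" using sK ss t(1) unfolding X_def by auto
    have "card (X - {\<sigma>, \<tau>}) < card X" using fX sX by (intro psubset_card_mono) auto
    then have "card {\<rho>\<in>K'. s \<subseteq> \<rho>} < n"
      unfolding XK' using less.prems(1) unfolding X_def by simp
    then have "elementary_collapse\<^sup>*\<^sup>* K' {\<rho>\<in>K'. \<not> s \<subseteq> \<rho>}"
      using less.IH[OF _ refl scK' less.prems(3,4) hyp] by blast
    moreover have "{\<rho>\<in>K'. \<not> s \<subseteq> \<rho>} = {\<rho>\<in>K. \<not> s \<subseteq> \<rho>}"
      unfolding K'_def using ss tK by blast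
    ultimately show ?thesis using ec by (metis converse_rtranclp_into_rtranclp)
  qed
qed

lemma cone_collapse:
  assumes "simplicial_complex K" "s \<noteq> {}" "c \<notin> s"
    "\<forall>\<tau>\<in>K. s \<subseteq> \<tau> \<longrightarrow> insert c \<tau> \<in> K"
  shows "elementary_collapse\<^sup>*\<^sup>* K {\<tau>\<in>K. \<not> s \<subseteq> \<tau>}"
  using cone_collapse_n[OF refl assms] .



definition Ap :: "('v + 'v set) set \<Rightarrow> 'v set" where "Ap \<sigma> = {a. Inl a \<in> \<sigma>}"
definition Cp :: "('v + 'v set) set \<Rightarrow> 'v set set" where "Cp \<sigma> = {F. Inr F \<in> \<sigma>}"

definition SG :: "'v set set \<Rightarrow> 'v set set \<Rightarrow> 'v set set \<Rightarrow> ('v + 'v set) set set" where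
  "SG K D E = {\<sigma>. \<sigma> \<noteq> {} \<and> Cp \<sigma> \<subseteq> E \<and> (\<forall>F\<in>Cp \<sigma>. \<forall>G\<in>Cp \<sigma>. F \<subseteq> G \<or> G \<subseteq> F)
     \<and> (Ap \<sigma> = {} \<or> Ap \<sigma> \<in> K - D) \<and> (\<forall>F\<in>Cp \<sigma>. Ap \<sigma> \<subseteq> F)}"

lemma SG_I:
  assumes "\<sigma> \<noteq> {}" "Cp \<sigma> \<subseteq> E" "\<And>F G. F \<in> Cp \<sigma> \<Longrightarrow> G \<in> Cp \<sigma> \<Longrightarrow> F \<subseteq> G \<or> G \<subseteq> F"
    "Ap \<sigma> = {} \<or> Ap \<sigma> \<in> K - D" "\<And>F. F \<in> Cp \<sigma> \<Longrightarrow> Ap \<sigma> \<subseteq> F"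
  shows "\<sigma> \<in> SG K D E"
  unfolding SG_def mem_Collect_eq using assms by (intro conjI ballI) auto

lemma SG_D:
  assumes "\<sigma> \<in> SG K D E"
  shows "\<sigma> \<noteq> {}" "Cp \<sigma> \<subseteq> E" "\<And>F G. F \<in> Cp \<sigma> \<Longrightarrow> G \<in> Cp \<sigma> \<Longrightarrow> F \<subseteq> G \<or> G \<subseteq> F"
    "Ap \<sigma> = {} \<or> Ap \<sigma> \<in> K - D" "\<And>F. F \<in> Cp \<sigma> \<Longrightarrow> Ap \<sigma> \<subseteq> F"
proof -
  have h: "\<sigma> \<noteq> {} \<and> Cp \<sigma> \<subseteq> E \<and> (\<forall>F\<in>Cp \<sigma>. \<forall>G\<in>Cp \<sigma>. F \<subseteq> G \<or> G \<subseteq> F)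
     \<and> (Ap \<sigma> = {} \<or> Ap \<sigma> \<in> K - D) \<and> (\<forall>F\<in>Cp \<sigma>. Ap \<sigma> \<subseteq> F)"
    using assms by (simp add: SG_def)
  show "\<sigma> \<noteq> {}" using h by auto
  show "Cp \<sigma> \<subseteq> E" using h by auto
  show "Ap \<sigma> = {} \<or> Ap \<sigma> \<in> K - D" using h by auto
  show "\<And>F G. F \<in> Cp \<sigma> \<Longrightarrow> G \<in> Cp \<sigma> \<Longrightarrow> F \<subseteq> G \<or> G \<subseteq> F" using h by auto
  show "\<And>F. F \<in> Cp \<sigma> \<Longrightarrow> Ap \<sigma> \<subseteq> F" using h by auto
qed

definition upclosed :: "'v set set \<Rightarrow> 'v set set \<Rightarrow> bool" where
  "upclosed K D \<longleftrightarrow> (\<forall>F\<in>D. \<forall>G\<in>K. F \<subseteq> G \<longrightarrow> G \<in> D)"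

lemma upclosedD: "upclosed K D \<Longrightarrow> F \<in> D \<Longrightarrow> G \<in> K \<Longrightarrow> F \<subseteq> G \<Longrightarrow> G \<in> D"
  unfolding upclosed_def by blast

lemma sc_SG:
  fixes K :: "'v::finite set set"
  assumes "simplicial_complex K" "upclosed K D"
  shows "simplicial_complex (SG K D E)"
proof -
  have K: "\<And>s t. s \<in> K \<Longrightarrow> t \<subseteq> s \<Longrightarrow> t \<noteq> {} \<Longrightarrow> t \<in> K"
    using assms(1) unfolding simplicial_complex_def by blast
  have 3: "\<forall>x\<in>SG K D E. \<forall>y. y \<subseteq> x \<and> y \<noteq> {} \<longrightarrow> y \<in> SG K D E"
  proof (intro ballI allI impI)
    fix x y assume xy: "x \<in> SG K D E" "y \<subseteq> x \<and> y \<noteq> {}"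
    have sub: "Ap y \<subseteq> Ap x" "Cp y \<subseteq> Cp x" using xy(2) unfolding Ap_def Cp_def by auto
    have "Ap y = {} \<or> Ap y \<in> K - D"
    proof (cases "Ap y = {}")
      case False
      have ax: "Ap x \<in> K - D" using SG_D(4)[OF xy(1)] False sub by blast
      then have "Ap y \<in> K" using K sub False by blast
      moreover have "Ap y \<notin> D" using assms(2) ax sub unfolding upclosed_def by blast
      ultimately show ?thesis by blast
    qed simp
    moreover have "Cp y \<subseteq> E" using SG_D(2)[OF xy(1)] sub by blast
    moreover have "\<And>F G. F \<in> Cp y \<Longrightarrow> G \<in> Cp y \<Longrightarrow> F \<subseteq> G \<or> G \<subseteq> F"
      using SG_D(3)[OF xy(1)] sub by blast
    moreover have "\<And>F. F \<in> Cp y \<Longrightarrow> Ap y \<subseteq> F" using SG_D(5)[OF xy(1)] sub by blast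
    ultimately show "y \<in> SG K D E" using xy(2) by (intro SG_I) auto
  qed
  have 2: "\<forall>x\<in>SG K D E. finite x \<and> x \<noteq> {}"
    using SG_D(1) finite_subset[OF subset_UNIV finite_UNIV] by blast
  have 1: "finite (SG K D E)" using finite_subset[OF subset_UNIV finite_UNIV] by blast
  show ?thesis unfolding simplicial_complex_def using 1 2 3 by (intro conjI)
qed

lemma Ap_insert_Inl[simp]: "Ap (insert (Inl u) \<sigma>) = insert u (Ap \<sigma>)" unfolding Ap_def by auto
lemma Cp_insert_Inl[simp]: "Cp (insert (Inl u) \<sigma>) = Cp \<sigma>" unfolding Cp_def by auto
lemma Ap_insert_Inr[simp]: "Ap (insert (Inr u) \<sigma>) = Ap \<sigma>" unfolding Ap_def by auto
lemma Cp_insert_Inr[simp]: "Cp (insert (Inr u) \<sigma>) = insert u (Cp \<sigma>)" unfolding Cp_def by auto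

lemma step_a:
  fixes K :: "'v::finite set set"
  assumes "simplicial_complex K" "upclosed K D" "s \<in> K" "s \<notin> D"
  shows "elementary_collapse\<^sup>*\<^sup>* (SG K D (insert s D)) (SG K D D)"
proof -
  have K: "\<And>s t. s \<in> K \<Longrightarrow> t \<subseteq> s \<Longrightarrow> t \<noteq> {} \<Longrightarrow> t \<in> K" "\<And>s. s \<in> K \<Longrightarrow> s \<noteq> {}"
    using assms(1) unfolding simplicial_complex_def by blast+
  obtain u where u: "u \<in> s" using K(2)[OF assms(3)] by blast
  let ?J = "SG K D (insert s D)"
  have cone: "\<forall>\<tau>\<in>?J. {Inr s} \<subseteq> \<tau> \<longrightarrow> insert (Inl u) \<tau> \<in> ?J"
  proof (intro ballI impI)
    fix \<tau> assume t: "\<tau> \<in> ?J" "{Inr s} \<subseteq> \<tau>"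
    have sC: "s \<in> Cp \<tau>" using t(2) unfolding Cp_def by auto
    have As: "Ap \<tau> \<subseteq> s" using SG_D(5)[OF t(1) sC] .
    have sub1: "insert u (Ap \<tau>) \<subseteq> s" using As u by simp
    have iK: "insert u (Ap \<tau>) \<in> K" using K(1)[OF assms(3) sub1] by simp
    have iD: "insert u (Ap \<tau>) \<notin> D" using upclosedD[OF assms(2) _ assms(3) sub1] assms(4) by auto
    have below: "\<And>F. F \<in> Cp \<tau> \<Longrightarrow> s \<subseteq> F"
    proof -
      fix F assume F: "F \<in> Cp \<tau>"
      have "F \<subseteq> s \<or> s \<subseteq> F" using SG_D(3)[OF t(1) sC F] by blast
      moreover have "F \<in> insert s D" using SG_D(2)[OF t(1)] F by (rule subsetD)
      moreover have "F \<subseteq> s \<Longrightarrow> F \<in> D \<Longrightarrow> False" using upclosedD[OF assms(2) _ assms(3)] assms(4) by auto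
      ultimately show "s \<subseteq> F" by auto
    qed
    show "insert (Inl u) \<tau> \<in> ?J"
    proof (rule SG_I)
      show "insert (Inl u) \<tau> \<noteq> {}" by simp
      show "Cp (insert (Inl u) \<tau>) \<subseteq> insert s D" using SG_D(2)[OF t(1)] by simp
      show "\<And>F G. F \<in> Cp (insert (Inl u) \<tau>) \<Longrightarrow> G \<in> Cp (insert (Inl u) \<tau>) \<Longrightarrow> F \<subseteq> G \<or> G \<subseteq> F"
        using SG_D(3)[OF t(1)] by simp
      show "Ap (insert (Inl u) \<tau>) = {} \<or> Ap (insert (Inl u) \<tau>) \<in> K - D" using iK iD by simp
      show "\<And>F. F \<in> Cp (insert (Inl u) \<tau>) \<Longrightarrow> Ap (insert (Inl u) \<tau>) \<subseteq> F"
        using below As u by auto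
    qed
  qed
  have "elementary_collapse\<^sup>*\<^sup>* ?J {\<tau>\<in>?J. \<not> {Inr s} \<subseteq> \<tau>}"
    by (rule cone_collapse[OF sc_SG[OF assms(1,2)] _ _ cone]) auto
  moreover have "{\<tau>\<in>?J. \<not> {Inr s} \<subseteq> \<tau>} = SG K D D"
  proof (rule set_eqI, rule iffI)
    fix \<tau> assume t: "\<tau> \<in> {\<tau>\<in>?J. \<not> {Inr s} \<subseteq> \<tau>}"
    then have t1: "\<tau> \<in> ?J" and ns: "s \<notin> Cp \<tau>" unfolding Cp_def by auto
    show "\<tau> \<in> SG K D D"
    proof (rule SG_I)
      show "\<tau> \<noteq> {}" using SG_D(1)[OF t1] .
      show "Cp \<tau> \<subseteq> D" using SG_D(2)[OF t1] ns by blast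
    qed (use SG_D(3-5)[OF t1] in auto)
  next
    fix \<tau> assume t: "\<tau> \<in> SG K D D"
    have ns: "s \<notin> Cp \<tau>" using SG_D(2)[OF t] assms(4) by blast
    have "\<tau> \<in> ?J"
    proof (rule SG_I)
      show "\<tau> \<noteq> {}" using SG_D(1)[OF t] .
      show "Cp \<tau> \<subseteq> insert s D" using SG_D(2)[OF t] by blast
    qed (use SG_D(3-5)[OF t] in auto)
    moreover have "\<not> {Inr s} \<subseteq> \<tau>" using ns unfolding Cp_def by auto
    ultimately show "\<tau> \<in> {\<tau>\<in>?J. \<not> {Inr s} \<subseteq> \<tau>}" by blast
  qed
  ultimately show ?thesis by simp
qed

lemma step_b:
  fixes K :: "'v::finite set set"
  assumes "simplicial_complex K" "upclosed K D" "s \<in> K" "s \<notin> D"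
    "\<And>G. G \<in> K \<Longrightarrow> s \<subset> G \<Longrightarrow> G \<in> D"
  shows "elementary_collapse\<^sup>*\<^sup>* (SG K D (insert s D)) (SG K (insert s D) (insert s D))"
proof -
  have sne: "s \<noteq> {}" using assms(1,3) unfolding simplicial_complex_def by blast
  let ?J = "SG K D (insert s D)"
  have incl: "\<And>\<tau>. (Inl ` s \<subseteq> \<tau>) = (s \<subseteq> Ap \<tau>)" unfolding Ap_def by auto
  have eqs: "\<And>\<tau>. \<tau> \<in> ?J \<Longrightarrow> s \<subseteq> Ap \<tau> \<Longrightarrow> Ap \<tau> = s"
  proof -
    fix \<tau> assume t: "\<tau> \<in> ?J" "s \<subseteq> Ap \<tau>"
    have "Ap \<tau> \<noteq> {}" using t(2) sne by auto
    then have "Ap \<tau> \<in> K - D" using SG_D(4)[OF t(1)] by simp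
    then show "Ap \<tau> = s" using assms(5)[of "Ap \<tau>"] t(2) by auto
  qed
  have cone: "\<forall>\<tau>\<in>?J. Inl ` s \<subseteq> \<tau> \<longrightarrow> insert (Inr s) \<tau> \<in> ?J"
  proof (intro ballI impI)
    fix \<tau> assume t: "\<tau> \<in> ?J" "Inl ` s \<subseteq> \<tau>"
    have A: "Ap \<tau> = s" using eqs[OF t(1)] t(2) incl by simp
    show "insert (Inr s) \<tau> \<in> ?J"
    proof (rule SG_I)
      show "insert (Inr s) \<tau> \<noteq> {}" by simp
      show "Cp (insert (Inr s) \<tau>) \<subseteq> insert s D" using SG_D(2)[OF t(1)] by simp
      show "\<And>F G. F \<in> Cp (insert (Inr s) \<tau>) \<Longrightarrow> G \<in> Cp (insert (Inr s) \<tau>) \<Longrightarrow> F \<subseteq> G \<or> G \<subseteq> F"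
        using SG_D(3)[OF t(1)] SG_D(5)[OF t(1)] A by auto
      show "Ap (insert (Inr s) \<tau>) = {} \<or> Ap (insert (Inr s) \<tau>) \<in> K - D" using SG_D(4)[OF t(1)] by simp
      show "\<And>F. F \<in> Cp (insert (Inr s) \<tau>) \<Longrightarrow> Ap (insert (Inr s) \<tau>) \<subseteq> F"
        using SG_D(5)[OF t(1)] A by auto
    qed
  qed
  have "elementary_collapse\<^sup>*\<^sup>* ?J {\<tau>\<in>?J. \<not> Inl ` s \<subseteq> \<tau>}"
    by (rule cone_collapse[OF sc_SG[OF assms(1,2)] _ _ cone]) (use sne in auto)
  moreover have "{\<tau>\<in>?J. \<not> Inl ` s \<subseteq> \<tau>} = SG K (insert s D) (insert s D)"
  proof (rule set_eqI, rule iffI)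
    fix \<tau> assume t: "\<tau> \<in> {\<tau>\<in>?J. \<not> Inl ` s \<subseteq> \<tau>}"
    then have t1: "\<tau> \<in> ?J" and ns: "\<not> s \<subseteq> Ap \<tau>" using incl by auto
    have "Ap \<tau> \<noteq> s" using ns by auto
    then have "Ap \<tau> = {} \<or> Ap \<tau> \<in> K - insert s D" using SG_D(4)[OF t1] by auto
    then show "\<tau> \<in> SG K (insert s D) (insert s D)"
      by (intro SG_I) (use SG_D(1,2,3,5)[OF t1] in auto)
  next
    fix \<tau> assume t: "\<tau> \<in> SG K (insert s D) (insert s D)"
    have A: "Ap \<tau> = {} \<or> Ap \<tau> \<in> K - insert s D" using SG_D(4)[OF t] .
    have ns: "\<not> s \<subseteq> Ap \<tau>"
    proof
      assume ss: "s \<subseteq> Ap \<tau>"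
      then have "Ap \<tau> \<noteq> {}" using sne by auto
      then have "Ap \<tau> \<in> K" "Ap \<tau> \<noteq> s" "Ap \<tau> \<notin> D" using A by auto
      then show False using assms(5)[of "Ap \<tau>"] ss by auto
    qed
    have "Ap \<tau> = {} \<or> Ap \<tau> \<in> K - D" using A by auto
    then have "\<tau> \<in> ?J" by (intro SG_I) (use SG_D(1,2,3,5)[OF t] in auto)
    then show "\<tau> \<in> {\<tau>\<in>?J. \<not> Inl ` s \<subseteq> \<tau>}" using ns incl by auto
  qed
  ultimately show ?thesis by simp
qed

lemma step_eqv:
  fixes K :: "'v::finite set set"
  assumes "inj h" "simplicial_complex K" "upclosed K D" "s \<in> K" "s \<notin> D"
    "\<And>G. G \<in> K \<Longrightarrow> s \<subset> G \<Longrightarrow> G \<in> D"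
  shows "sh_step\<^sup>*\<^sup>* (cmap h (SG K D D)) (cmap h (SG K (insert s D) (insert s D)))"
proof -
  have scJ: "simplicial_complex (SG K D (insert s D))" using sc_SG[OF assms(2,3)] .
  have 1: "sh_step\<^sup>*\<^sup>* (cmap h (SG K D D)) (cmap h (SG K D (insert s D)))"
    using collapse_sh[OF assms(1) scJ step_a[OF assms(2-5)]] by blast
  have 2: "sh_step\<^sup>*\<^sup>* (cmap h (SG K D (insert s D))) (cmap h (SG K (insert s D) (insert s D)))"
    using collapse_sh[OF assms(1) scJ step_b[OF assms(2-6)]] by blast
  show ?thesis using 1 2 by (rule rtranclp_trans)
qed

lemma iterate:
  fixes K :: "'v::finite set set"
  assumes "inj h" "simplicial_complex K"
  shows "T \<subseteq> K \<Longrightarrow> upclosed K (K - T) \<Longrightarrow>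
    sh_step\<^sup>*\<^sup>* (cmap h (SG K (K - T) (K - T))) (cmap h (SG K K K))"
  using finite_subset[OF subset_UNIV finite_UNIV, of T]
proof (induction T rule: finite_ranking_induct[where f = card])
  case empty
  then show ?case by simp
next
  case (insert x S)
  show ?case
  proof (cases "x \<in> S")
    case True
    then have "insert x S = S" by blast
    then show ?thesis using insert.IH insert.prems by simp
  next
    case False
    let ?D = "K - insert x S"
    have xK: "x \<in> K" using insert.prems(1) by blast
    have SK: "S \<subseteq> K" using insert.prems(1) by blast
    have bigger: "\<And>G. G \<in> K \<Longrightarrow> x \<subset> G \<Longrightarrow> G \<notin> S"
    proof
      fix G assume G: "G \<in> K" "x \<subset> G" "G \<in> S"
      have "card x < card G" using G(2) by (intro psubset_card_mono) (use finite_subset[OF subset_UNIV finite_UNIV] in auto)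
      then show False using insert.hyps(2)[OF G(3)] by simp
    qed
    have up: "upclosed K (K - S)"
      unfolding upclosed_def
    proof (intro ballI impI)
      fix F G assume F: "F \<in> K - S" "G \<in> K" "F \<subseteq> G"
      show "G \<in> K - S"
      proof (cases "F = x")
        case True
        then show ?thesis using bigger[OF F(2)] F False by auto
      next
        case Fx: False
        then have "F \<in> ?D" using F by blast
        then have "G \<in> ?D" using upclosedD[OF insert.prems(2) _ F(2,3)] by blast
        then show ?thesis by blast
      qed
    qed
    have IH: "sh_step\<^sup>*\<^sup>* (cmap h (SG K (K - S) (K - S))) (cmap h (SG K K K))"
      using insert.IH[OF SK up] .
    have eqD: "insert x ?D = K - S" using xK False by blast
    have st: "sh_step\<^sup>*\<^sup>* (cmap h (SG K ?D ?D)) (cmap h (SG K (insert x ?D) (insert x ?D)))"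
    proof (rule step_eqv[OF assms(1,2) insert.prems(2) xK])
      show "x \<notin> ?D" by blast
      fix G assume "G \<in> K" "x \<subset> G"
      then show "G \<in> ?D" using bigger by blast
    qed
    show ?thesis using st IH unfolding eqD by (rule rtranclp_trans)
  qed
qed

lemma decomp:
  fixes \<sigma> :: "('v + 'v set) set"
  shows "\<sigma> = Inl ` Ap \<sigma> \<union> Inr ` Cp \<sigma>"
  unfolding Ap_def Cp_def
proof (rule set_eqI)
  fix x show "x \<in> \<sigma> \<longleftrightarrow> x \<in> Inl ` {a. Inl a \<in> \<sigma>} \<union> Inr ` {F. Inr F \<in> \<sigma>}"
    by (cases x) auto
qed

lemma SG_empty:
  fixes K :: "'v set set"
  assumes "simplicial_complex K"
  shows "SG K {} {} = cmap Inl K"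
proof (rule set_eqI, rule iffI)
  fix \<sigma> :: "('v + 'v set) set" assume s: "\<sigma> \<in> SG K {} {}"
  have C: "Cp \<sigma> = {}" using SG_D(2)[OF s] by blast
  then have e: "\<sigma> = Inl ` Ap \<sigma>" using decomp[of \<sigma>] by simp
  then have "Ap \<sigma> \<noteq> {}" using SG_D(1)[OF s] by auto
  then have "Ap \<sigma> \<in> K" using SG_D(4)[OF s] by simp
  then show "\<sigma> \<in> cmap Inl K" unfolding cmap_def using e by blast
next
  fix \<sigma> :: "('v + 'v set) set" assume "\<sigma> \<in> cmap Inl K"
  then obtain A where A: "A \<in> K" "\<sigma> = Inl ` A" unfolding cmap_def by blast
  have ne: "A \<noteq> {}" using A(1) assms unfolding simplicial_complex_def by blast
  have "Ap \<sigma> = A" "Cp \<sigma> = {}" unfolding Ap_def Cp_def A(2) by auto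
  then show "\<sigma> \<in> SG K {} {}" using A ne by (intro SG_I) auto
qed

lemma SG_full:
  fixes K :: "'v::finite set set"
  shows "SG K K K = cmap Inr (barycentric K)"
proof (rule set_eqI, rule iffI)
  fix \<sigma> :: "('v + 'v set) set" assume s: "\<sigma> \<in> SG K K K"
  have A: "Ap \<sigma> = {}" using SG_D(4)[OF s] by blast
  then have e: "\<sigma> = Inr ` Cp \<sigma>" using decomp[of \<sigma>] by simp
  then have ne: "Cp \<sigma> \<noteq> {}" using SG_D(1)[OF s] by auto
  have "Cp \<sigma> \<in> barycentric K" unfolding barycentric_def order_complex_def
    using SG_D(2,3)[OF s] ne finite_subset[OF subset_UNIV finite_UNIV] by blast
  then show "\<sigma> \<in> cmap Inr (barycentric K)" unfolding cmap_def using e by blast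
next
  fix \<sigma> :: "('v + 'v set) set" assume "\<sigma> \<in> cmap Inr (barycentric K)"
  then obtain C where C: "C \<in> barycentric K" "\<sigma> = Inr ` C" unfolding cmap_def by blast
  have C2: "C \<subseteq> K" "C \<noteq> {}" "\<And>x y. x \<in> C \<Longrightarrow> y \<in> C \<Longrightarrow> x \<subseteq> y \<or> y \<subseteq> x"
    using C(1) unfolding barycentric_def order_complex_def by blast+
  have "Ap \<sigma> = {}" "Cp \<sigma> = C" unfolding Ap_def Cp_def C(2) by auto
  then show "\<sigma> \<in> SG K K K" using C2 C(2) by (intro SG_I) auto
qed

theorem K_Bd:
  fixes K :: "'v::finite set set" and h :: "'v + 'v set \<Rightarrow> nat"
  assumes "inj h" "simplicial_complex K"
  shows "sh_step\<^sup>*\<^sup>* (cmap (h \<circ> Inl) K) (cmap (h \<circ> Inr) (barycentric K))"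
proof -
  have "sh_step\<^sup>*\<^sup>* (cmap h (SG K (K - K) (K - K))) (cmap h (SG K K K))"
    using iterate[OF assms, of K] unfolding upclosed_def by blast
  then have "sh_step\<^sup>*\<^sup>* (cmap h (cmap Inl K)) (cmap h (cmap Inr (barycentric K)))"
    using SG_empty[OF assms(2)] SG_full[of K] by simp
  moreover have "cmap (h \<circ> Inl) K = cmap h (cmap Inl K)"
    unfolding cmap_def by (simp add: image_comp)
  moreover have "cmap (h \<circ> Inr) (barycentric K) = cmap h (cmap Inr (barycentric K))"
    unfolding cmap_def by (simp add: image_comp)
  ultimately show ?thesis by simp
qed



lemma atom_pos: "a \<in> lattice_atoms \<Longrightarrow> (bot::'a::complete_lattice) < a"
  unfolding lattice_atoms_def by blast

lemma Sup_atoms_below: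
  assumes "atomic_lattice TYPE('a::complete_lattice)"
  shows "Sup (atoms_below (x::'a)) = x"
proof -
  obtain S where S: "S \<subseteq> lattice_atoms" "x = Sup S" using assms unfolding atomic_lattice_def by blast
  have "S \<subseteq> atoms_below x" unfolding atoms_below_def using S by (auto intro: Sup_upper)
  then have "x \<le> Sup (atoms_below x)" using S(2) by (simp add: Sup_subset_mono)
  moreover have "Sup (atoms_below x) \<le> x" unfolding atoms_below_def by (rule Sup_least) auto
  ultimately show ?thesis by (rule antisym[rotated])
qed

lemma atoms_below_mono: "(x::'a::complete_lattice) \<le> y \<Longrightarrow> atoms_below x \<subseteq> atoms_below y"
  unfolding atoms_below_def by auto

lemma atoms_below_le:
  assumes "atomic_lattice TYPE('a::complete_lattice)" "atoms_below (x::'a) \<subseteq> atoms_below y"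
  shows "x \<le> y"
proof -
  have "Sup (atoms_below x) \<le> Sup (atoms_below y)" using assms(2) by (rule Sup_subset_mono)
  then show ?thesis using Sup_atoms_below[OF assms(1)] by metis
qed

lemma inj_atoms_below:
  assumes "atomic_lattice TYPE('a::complete_lattice)"
  shows "inj (atoms_below :: 'a \<Rightarrow> 'a set)"
  by (rule injI) (metis Sup_atoms_below[OF assms])

lemma atoms_below_crosscut:
  assumes "atomic_lattice TYPE('a::complete_lattice)" "(x::'a) \<in> proper_part"
  shows "atoms_below x \<in> atom_crosscut"
proof -
  have x: "x \<noteq> bot" "x \<noteq> top" using assms(2) unfolding proper_part_def by auto
  have e: "Sup (atoms_below x) = x" using Sup_atoms_below[OF assms(1)] .
  then have "atoms_below x \<noteq> {}" using x(1) by auto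
  moreover have "atoms_below x \<subseteq> lattice_atoms" unfolding atoms_below_def by auto
  ultimately show ?thesis unfolding atom_crosscut_def using e x(2) by auto
qed

lemma sc_crosscut: "simplicial_complex (atom_crosscut :: 'a::{finite,complete_lattice} set set)"
proof -
  have 3: "\<forall>x\<in>(atom_crosscut :: 'a set set). \<forall>y. y \<subseteq> x \<and> y \<noteq> {} \<longrightarrow> y \<in> atom_crosscut"
  proof (intro ballI allI impI)
    fix x y :: "'a set" assume xy: "x \<in> atom_crosscut" "y \<subseteq> x \<and> y \<noteq> {}"
    have "Sup y \<le> Sup x" using xy(2) by (simp add: Sup_subset_mono)
    moreover have "Sup x \<noteq> top" using xy(1) unfolding atom_crosscut_def by blast
    ultimately have "Sup y \<noteq> top" using top.extremum_unique by fastforce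
    then show "y \<in> atom_crosscut" using xy unfolding atom_crosscut_def by blast
  qed
  have 2: "\<forall>x\<in>(atom_crosscut :: 'a set set). finite x \<and> x \<noteq> {}"
    unfolding atom_crosscut_def using finite_subset[OF subset_UNIV finite_UNIV] by blast
  have 1: "finite (atom_crosscut :: 'a set set)" using finite_subset[OF subset_UNIV finite_UNIV] by blast
  show ?thesis unfolding simplicial_complex_def using 1 2 3 by (intro conjI)
qed

lemma sc_order_complex:
  fixes P :: "'b::finite set"
  shows "simplicial_complex (order_complex P le)"
proof -
  have 3: "\<forall>x\<in>order_complex P le. \<forall>y. y \<subseteq> x \<and> y \<noteq> {} \<longrightarrow> y \<in> order_complex P le"
  proof (intro ballI allI impI)
    fix x y assume xy: "x \<in> order_complex P le" "y \<subseteq> x \<and> y \<noteq> {}"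
    show "y \<in> order_complex P le" using xy finite_subset[OF subset_UNIV finite_UNIV, of y]
      unfolding order_complex_def by blast
  qed
  have 2: "\<forall>x\<in>order_complex P le. finite x \<and> x \<noteq> {}"
    unfolding order_complex_def by blast
  have 1: "finite (order_complex P le)" using finite_subset[OF subset_UNIV finite_UNIV] by blast
  show ?thesis unfolding simplicial_complex_def using 1 2 3 by (intro conjI)
qed

lemma sc_barycentric:
  fixes K :: "'v::finite set set"
  shows "simplicial_complex (barycentric K)"
  unfolding barycentric_def by (rule sc_order_complex)

definition closedF :: "'a::complete_lattice set set" where
  "closedF = atoms_below ` proper_part"

definition KS :: "'a::complete_lattice set set \<Rightarrow> 'a set set set" where
  "KS S = {ch \<in> barycentric atom_crosscut. \<forall>F\<in>ch. F \<in> closedF \<or> F \<in> S}"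

definition cl :: "'a::complete_lattice set \<Rightarrow> 'a set" where
  "cl p = atoms_below (Sup p)"

lemma cl_props:
  assumes "(p::'a::complete_lattice set) \<in> atom_crosscut"
  shows "p \<subseteq> cl p" "cl p \<in> atom_crosscut" "cl p \<in> closedF"
    "\<And>y. p \<subseteq> atoms_below y \<Longrightarrow> cl p \<subseteq> atoms_below y"
proof -
  have p: "p \<subseteq> lattice_atoms" "p \<noteq> {}" "Sup p \<noteq> top" using assms unfolding atom_crosscut_def by auto
  show 1: "p \<subseteq> cl p" unfolding cl_def atoms_below_def using p(1) by (auto intro: Sup_upper)
  obtain a where a: "a \<in> p" using p(2) by blast
  have "bot < a" using atom_pos p(1) a by blast
  moreover have "a \<le> Sup p" using a by (rule Sup_upper)
  ultimately have nb: "Sup p \<noteq> bot" using order.strict_trans2 by fastforce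
  then have pp: "Sup p \<in> proper_part" unfolding proper_part_def using p(3) by simp
  show "cl p \<in> closedF" unfolding closedF_def cl_def using pp by blast
  have le: "Sup (cl p) \<le> Sup p" unfolding cl_def atoms_below_def by (rule Sup_least) auto
  then have "Sup (cl p) \<noteq> top" using p(3) top.extremum_unique by fastforce
  moreover have "cl p \<subseteq> lattice_atoms" unfolding cl_def atoms_below_def by auto
  moreover have "cl p \<noteq> {}" using 1 p(2) by blast
  ultimately show "cl p \<in> atom_crosscut" unfolding atom_crosscut_def by blast
  fix y assume "p \<subseteq> atoms_below y"
  then have "Sup p \<le> y" unfolding atoms_below_def by (auto intro: Sup_least)
  then show "cl p \<subseteq> atoms_below y" unfolding cl_def by (rule atoms_below_mono)
qed

lemma sc_KS: "simplicial_complex (KS (S :: 'a::{finite,complete_lattice} set set))"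
proof -
  have B: "simplicial_complex (barycentric (atom_crosscut :: 'a set set))" by (rule sc_barycentric)
  have 3: "\<forall>x\<in>KS S. \<forall>y. y \<subseteq> x \<and> y \<noteq> {} \<longrightarrow> y \<in> KS S"
  proof (intro ballI allI impI)
    fix x y assume xy: "x \<in> KS S" "y \<subseteq> x \<and> y \<noteq> {}"
    have "x \<in> barycentric atom_crosscut" using xy(1) unfolding KS_def by blast
    then have "y \<in> barycentric atom_crosscut" using B xy(2) unfolding simplicial_complex_def by blast
    then show "y \<in> KS S" using xy unfolding KS_def by blast
  qed
  have 2: "\<forall>x\<in>KS S. finite x \<and> x \<noteq> {}" using B unfolding KS_def simplicial_complex_def by blast
  have 1: "finite (KS S)" using finite_subset[OF subset_UNIV finite_UNIV] by blast
  show ?thesis unfolding simplicial_complex_def using 1 2 3 by (intro conjI)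
qed

lemma KS_step:
  fixes S :: "'a::{finite,complete_lattice} set set"
  assumes "x \<in> atom_crosscut" "x \<notin> closedF" "x \<notin> S" "\<And>y. y \<in> S \<Longrightarrow> card y \<le> card x"
  shows "elementary_collapse\<^sup>*\<^sup>* (KS (insert x S)) (KS S)"
proof -
  note c = cl_props[OF assms(1)]
  have cx: "cl x \<notin> {x}" using c(3) assms(2) by auto
  have fin: "\<And>A :: 'a set. finite A" using finite_subset[OF subset_UNIV finite_UNIV] by blast
  have cone: "\<forall>ch\<in>KS (insert x S). {x} \<subseteq> ch \<longrightarrow> insert (cl x) ch \<in> KS (insert x S)"
  proof (intro ballI impI)
    fix ch assume ch: "ch \<in> KS (insert x S)" "{x} \<subseteq> ch"
    have ch1: "ch \<subseteq> atom_crosscut" "\<And>F G. F \<in> ch \<Longrightarrow> G \<in> ch \<Longrightarrow> F \<subseteq> G \<or> G \<subseteq> F"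
      "\<And>F. F \<in> ch \<Longrightarrow> F \<in> closedF \<or> F \<in> insert x S"
      using ch(1) unfolding KS_def barycentric_def order_complex_def by blast+
    have xch: "x \<in> ch" using ch(2) by simp
    have comp: "\<And>F. F \<in> ch \<Longrightarrow> F \<subseteq> cl x \<or> cl x \<subseteq> F"
    proof -
      fix F assume F: "F \<in> ch"
      show "F \<subseteq> cl x \<or> cl x \<subseteq> F"
      proof (cases "F \<subseteq> x")
        case True
        then show ?thesis using c(1) by blast
      next
        case False
        then have xF: "x \<subseteq> F" using ch1(2)[OF F xch] by blast
        show ?thesis
        proof (cases "F \<in> closedF")
          case True
          then obtain y where "F = atoms_below y" unfolding closedF_def by blast
          then show ?thesis using c(4) xF by blast
        next
          case False
          then have "F \<in> insert x S" using ch1(3)[OF F] by blast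
          then have "F = x"
          proof
            assume "F \<in> S"
            then have "card F \<le> card x" by (rule assms(4))
            then show "F = x" using xF fin by (metis card_seteq)
          qed
          then show ?thesis using c(1) by blast
        qed
      qed
    qed
    show "insert (cl x) ch \<in> KS (insert x S)"
      unfolding KS_def barycentric_def order_complex_def
    proof (intro CollectI conjI ballI)
      show "insert (cl x) ch \<subseteq> atom_crosscut" using ch1(1) c(2) by blast
      show "insert (cl x) ch \<noteq> {}" by simp
      show "finite (insert (cl x) ch)" using finite_subset[OF subset_UNIV finite_UNIV] by blast
      fix F assume F: "F \<in> insert (cl x) ch"
      show "F \<in> closedF \<or> F \<in> insert x S" using F ch1(3) c(3) by blast
      fix G assume G: "G \<in> insert (cl x) ch"
      show "F \<subseteq> G \<or> G \<subseteq> F" using F G comp ch1(2) by blast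
    qed
  qed
  have "elementary_collapse\<^sup>*\<^sup>* (KS (insert x S)) {ch \<in> KS (insert x S). \<not> {x} \<subseteq> ch}"
    by (rule cone_collapse[OF sc_KS _ cx cone]) simp
  moreover have "{ch \<in> KS (insert x S). \<not> {x} \<subseteq> ch} = KS S"
    unfolding KS_def using assms(2,3) by blast
  ultimately show ?thesis by simp
qed

lemma KS_iter:
  fixes S :: "'a::{finite,complete_lattice} set set"
  shows "S \<subseteq> atom_crosscut - closedF \<Longrightarrow> elementary_collapse\<^sup>*\<^sup>* (KS S) (KS {})"
  using finite_subset[OF subset_UNIV finite_UNIV, of S]
proof (induction S rule: finite_ranking_induct[where f = card])
  case empty
  then show ?case by simp
next
  case (insert x S)
  show ?case
  proof (cases "x \<in> S")
    case True
    then have "insert x S = S" by blast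
    then show ?thesis using insert.IH insert.prems by simp
  next
    case False
    have x: "x \<in> atom_crosscut" "x \<notin> closedF" using insert.prems by auto
    have "elementary_collapse\<^sup>*\<^sup>* (KS (insert x S)) (KS S)"
      using KS_step[OF x False insert.hyps(2)] .
    moreover have "elementary_collapse\<^sup>*\<^sup>* (KS S) (KS {})" using insert.IH insert.prems by blast
    ultimately show ?thesis by (rule rtranclp_trans)
  qed
qed

lemma KS_all: "KS (atom_crosscut - closedF) = barycentric (atom_crosscut :: 'a::complete_lattice set set)"
  unfolding KS_def barycentric_def order_complex_def by blast

lemma KS_empty:
  assumes "atomic_lattice TYPE('a::{finite,complete_lattice})"
  shows "KS {} = (\<lambda>c. atoms_below ` c) ` order_complex (proper_part :: 'a set) (\<le>)"
proof (rule set_eqI, rule iffI)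
  fix ch :: "'a set set" assume ch: "ch \<in> KS {}"
  have ch1: "ch \<noteq> {}" "\<And>F G. F \<in> ch \<Longrightarrow> G \<in> ch \<Longrightarrow> F \<subseteq> G \<or> G \<subseteq> F"
      "\<And>F. F \<in> ch \<Longrightarrow> F \<in> closedF"
      using ch unfolding KS_def barycentric_def order_complex_def by blast+
  define c where "c = {y \<in> proper_part. atoms_below y \<in> ch}"
  have e: "atoms_below ` c = ch"
  proof
    show "atoms_below ` c \<subseteq> ch" unfolding c_def by blast
    show "ch \<subseteq> atoms_below ` c"
    proof
      fix F assume F: "F \<in> ch"
      then obtain y where "y \<in> proper_part" "F = atoms_below y" using ch1(3) unfolding closedF_def by blast
      then show "F \<in> atoms_below ` c" unfolding c_def using F by blast
    qed
  qed
  have "c \<in> order_complex proper_part (\<le>)" unfolding order_complex_def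
  proof (intro CollectI conjI ballI)
    show "c \<subseteq> proper_part" unfolding c_def by blast
    show "c \<noteq> {}" using e ch1(1) by blast
    show "finite c" using finite_subset[OF subset_UNIV finite_UNIV] by blast
    fix x y assume "x \<in> c" "y \<in> c"
    then have "atoms_below x \<in> ch" "atoms_below y \<in> ch" unfolding c_def by auto
    then have "atoms_below x \<subseteq> atoms_below y \<or> atoms_below y \<subseteq> atoms_below x" using ch1(2) by blast
    then show "x \<le> y \<or> y \<le> x" using atoms_below_le[OF assms] by blast
  qed
  then show "ch \<in> (\<lambda>c. atoms_below ` c) ` order_complex proper_part (\<le>)" using e by blast
next
  fix ch :: "'a set set" assume "ch \<in> (\<lambda>c. atoms_below ` c) ` order_complex proper_part (\<le>)"
  then obtain c where c: "c \<in> order_complex proper_part (\<le>)" "ch = atoms_below ` c" by blast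
  have c1: "c \<subseteq> proper_part" "c \<noteq> {}" "\<And>x y. x \<in> c \<Longrightarrow> y \<in> c \<Longrightarrow> x \<le> y \<or> y \<le> x"
    using c(1) unfolding order_complex_def by blast+
  show "ch \<in> KS {}" unfolding KS_def barycentric_def order_complex_def
  proof (intro CollectI conjI ballI)
    show "ch \<subseteq> atom_crosscut" using c(2) c1(1) atoms_below_crosscut[OF assms] by blast
    show "ch \<noteq> {}" using c(2) c1(2) by blast
    show "finite ch" using finite_subset[OF subset_UNIV finite_UNIV] by blast
    fix F assume F: "F \<in> ch"
    show "F \<in> closedF \<or> F \<in> {}" using F c(2) c1(1) unfolding closedF_def by blast
    fix G assume G: "G \<in> ch"
    show "F \<subseteq> G \<or> G \<subseteq> F" using F G c(2) c1(3) atoms_below_mono by blast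
  qed
qed

theorem part1:
  assumes "atomic_lattice TYPE('a::{finite, complete_lattice})"
  shows "collapses_onto (barycentric (atom_crosscut :: 'a set set))
            ((\<lambda>c. atoms_below ` c) ` order_complex (proper_part :: 'a set) (\<le>))"
proof -
  have "elementary_collapse\<^sup>*\<^sup>* (KS (atom_crosscut - closedF :: 'a set set)) (KS {})"
    by (rule KS_iter) simp
  then have "elementary_collapse\<^sup>*\<^sup>* (barycentric (atom_crosscut :: 'a set set))
            ((\<lambda>c. atoms_below ` c) ` order_complex (proper_part :: 'a set) (\<le>))"
    unfolding KS_all KS_empty[OF assms] .
  then show ?thesis unfolding collapses_onto_def using sc_barycentric by blast
qed

theorem mainTheorem2:
  assumes "atomic_lattice TYPE('a::{finite, complete_lattice})"
  shows "collapses_onto (barycentric (atom_crosscut :: 'a set set))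
            ((\<lambda>c. atoms_below ` c) ` order_complex (proper_part :: 'a set) (\<le>))
       \<and> same_simple_homotopy_type (atom_crosscut :: 'a set set)
            (order_complex (proper_part :: 'a set) (\<le>))"
proof
  show P1: "collapses_onto (barycentric (atom_crosscut :: 'a set set))
            ((\<lambda>c. atoms_below ` c) ` order_complex (proper_part :: 'a set) (\<le>))"
    using part1[OF assms] .
  obtain h :: "'a + 'a set \<Rightarrow> nat" where h: "inj h"
    using finite_imp_inj_to_nat_seg[OF finite_UNIV[where 'a = "'a + 'a set"]] by blast
  have ir: "inj (h \<circ> Inr)" using h by (simp add: inj_compose)
  have il: "inj (h \<circ> Inl)" using h by (simp add: inj_compose)
  let ?Img = "(\<lambda>c. atoms_below ` c) ` order_complex (proper_part :: 'a set) (\<le>)"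
  have s1: "sh_step\<^sup>*\<^sup>* (cmap (h \<circ> Inl) (atom_crosscut :: 'a set set))
                (cmap (h \<circ> Inr) (barycentric atom_crosscut))"
    using K_Bd[OF h sc_crosscut] .
  have "elementary_collapse\<^sup>*\<^sup>* (barycentric (atom_crosscut :: 'a set set)) ?Img"
    using P1 unfolding collapses_onto_def by blast
  then have s2: "sh_step\<^sup>*\<^sup>* (cmap (h \<circ> Inr) (barycentric atom_crosscut)) (cmap (h \<circ> Inr) ?Img)"
    using collapse_sh[OF ir sc_barycentric] by blast
  define g where "g = h \<circ> Inr \<circ> (atoms_below :: 'a \<Rightarrow> 'a set)"
  have ig: "inj g" unfolding g_def using ir inj_atoms_below[OF assms] by (simp add: inj_compose)
  have e: "cmap (h \<circ> Inr) ?Img = (`) g ` order_complex (proper_part :: 'a set) (\<le>)"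
    unfolding cmap_def g_def by (simp add: image_comp)
  have "sh_step\<^sup>*\<^sup>* ((`) (h \<circ> Inl) ` (atom_crosscut :: 'a set set)) ((`) g ` order_complex (proper_part :: 'a set) (\<le>))"
    using rtranclp_trans[OF s1 s2] unfolding e unfolding cmap_def .
  moreover have "inj_on (h \<circ> Inl) (\<Union>(atom_crosscut :: 'a set set))" using il by (rule inj_on_subset) simp
  moreover have "inj_on g (\<Union>(order_complex (proper_part :: 'a set) (\<le>)))" using ig by (rule inj_on_subset) simp
  ultimately show "same_simple_homotopy_type (atom_crosscut :: 'a set set)
            (order_complex (proper_part :: 'a set) (\<le>))"
    unfolding same_simple_homotopy_type_def using sc_crosscut sc_order_complex by blast
qed


end
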